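(* Let $E$ be a nonempty set and $\mathcal{E}$ a prepaving on $E$. Every maxitive measure $\nu$ on $\mathcal{E}$ is alternating (of infinite order), i.e. for all integers $n\geq 1$ and all $G,G_1,\dots,G_n\in\mathcal{E}$, \[ (-1)^{n+1}\,\Delta_{G_1}\cdots\Delta_{G_n}\nu(G)\geq 0 . \]
   Context: A prepaving on $E$ is a collection of subsets of $E$ containing $\emptyset$ and closed under finite unions. A maxitive measure on $\mathcal{E}$ is a map $\nu:\mathcal{E}\to[0,\infty]$ with $\nu(\emptyset)=0$ and $\nu(G\cup G')=\max(\nu(G),\nu(G'))$ for all $G,G'\in\mathcal{E}$. For a map $f:\mathcal{E}\to\mathbb{R}\cup\{\pm\infty\}$, define $\Delta_{G_1}f(G)=f(G\cup G_1)-f(G)$ and $\Delta_{G_1}\cdots\Delta_{G_n}f(G)$ by iterating this formula (applying $\Delta_{G_1}$ to the function $G\mapsto\Delta_{G_2}\cdots\Delta_{G_n}f(G)$), with the conventions $-\infty+\infty=\infty-\infty=0$. *)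

theory Defs
  imports "HOL-Library.Extended_Real"
begin

definition prepaving :: "'a set \<Rightarrow> 'a set set \<Rightarrow> bool" where
  "prepaving E \<E> \<longleftrightarrow> \<E> \<subseteq> Pow E \<and> {} \<in> \<E> \<and> (\<forall>G\<in>\<E>. \<forall>G'\<in>\<E>. G \<union> G' \<in> \<E>)"

definition maxitive_measure :: "'a set set \<Rightarrow> ('a set \<Rightarrow> ereal) \<Rightarrow> bool" where
  "maxitive_measure \<E> \<nu> \<longleftrightarrow> (\<forall>G\<in>\<E>. 0 \<le> \<nu> G) \<and> \<nu> {} = 0 \<and>
     (\<forall>G\<in>\<E>. \<forall>G'\<in>\<E>. \<nu> (G \<union> G') = max (\<nu> G) (\<nu> G'))"

text \<open>Difference with the paper's convention  -inf + inf = inf - inf = 0.\<close>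
definition ediff :: "ereal \<Rightarrow> ereal \<Rightarrow> ereal" where
  "ediff x y = (if x = y \<and> \<bar>x\<bar> = \<infinity> then 0 else x - y)"

fun Delta :: "'a set list \<Rightarrow> ('a set \<Rightarrow> ereal) \<Rightarrow> 'a set \<Rightarrow> ereal" where
  "Delta [] f G = f G"
| "Delta (G1 # Gs) f G = ediff (Delta Gs f (G \<union> G1)) (Delta Gs f G)"

end

theory Submission
  imports Defs
begin

lemma L2: "(y::ereal) \<le> y' \<Longrightarrow> ediff x y' \<le> ediff x y"
  unfolding ediff_def
  by (cases x; cases y; cases y') auto

lemma L3a: "(x::ereal) \<le> y \<Longrightarrow> ediff x y \<le> 0"
  unfolding ediff_def
  by (cases x; cases y) auto

lemma L3b: "(y::ereal) \<le> x \<Longrightarrow> ediff x y \<ge> 0"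
  unfolding ediff_def
  by (cases x; cases y) auto

lemma L0: "ediff x x = 0"
  unfolding ediff_def by (cases x) auto

fun Dv :: "ereal \<Rightarrow> ereal list \<Rightarrow> ereal" where
  "Dv a [] = a"
| "Dv a (b # bs) = ediff (Dv (max a b) bs) (Dv a bs)"

definition P :: "nat \<Rightarrow> (ereal \<Rightarrow> ereal) \<Rightarrow> bool" where
  "P k f \<longleftrightarrow> (if odd k then (\<forall>c. f c \<ge> 0) \<and> (\<forall>c c'. c \<le> c' \<longrightarrow> f c' \<le> f c)
                    else (\<forall>c. f c \<le> 0) \<and> (\<forall>c c'. c \<le> c' \<longrightarrow> f c \<le> f c'))"

lemma h1:
  fixes f :: "ereal \<Rightarrow> ereal"
  assumes nn: "\<And>c. f c \<ge> (0::ereal)" and an: "\<And>c c'. c \<le> c' \<Longrightarrow> f c' \<le> f c"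
  shows "(\<forall>a. ediff (f (max a b)) (f a) \<le> 0) \<and>
         (\<forall>a a'. a \<le> a' \<longrightarrow> ediff (f (max a b)) (f a) \<le> ediff (f (max a' b)) (f a'))"
proof (intro conjI allI impI)
  fix a show "ediff (f (max a b)) (f a) \<le> 0" using an[of a "max a b"] by (intro L3a) simp
next
  fix a a' :: ereal assume aa: "a \<le> a'"
  show "ediff (f (max a b)) (f a) \<le> ediff (f (max a' b)) (f a')"
  proof (cases "a' \<le> b")
    case True
    then have "max a b = b" "max a' b = b" using aa by auto
    then show ?thesis using L2[OF an[OF aa], of "f b"] by simp
  next
    case False
    then have "max a' b = a'" by auto
    then have r: "ediff (f (max a' b)) (f a') = 0" by (simp add: L0)
    show ?thesis unfolding r by (rule L3a) (simp add: an)
  qed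
qed

lemma h2:
  fixes f :: "ereal \<Rightarrow> ereal"
  assumes nn: "\<And>c. f c \<le> (0::ereal)" and an: "\<And>c c'. c \<le> c' \<Longrightarrow> f c \<le> f c'"
  shows "(\<forall>a. ediff (f (max a b)) (f a) \<ge> 0) \<and>
         (\<forall>a a'. a \<le> a' \<longrightarrow> ediff (f (max a' b)) (f a') \<le> ediff (f (max a b)) (f a))"
proof (intro conjI allI impI)
  fix a show "ediff (f (max a b)) (f a) \<ge> 0" using an[of a "max a b"] by (intro L3b) simp
next
  fix a a' :: ereal assume aa: "a \<le> a'"
  show "ediff (f (max a' b)) (f a') \<le> ediff (f (max a b)) (f a)"
  proof (cases "a' \<le> b")
    case True
    then have "max a b = b" "max a' b = b" using aa by auto
    then show ?thesis using L2[OF an[OF aa], of "f b"] by simp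
  next
    case False
    then have "max a' b = a'" by auto
    then have r: "ediff (f (max a' b)) (f a') = 0" by (simp add: L0)
    show ?thesis unfolding r by (rule L3b) (simp add: an)
  qed
qed

lemma Dv_P: "bs \<noteq> [] \<Longrightarrow> P (length bs) (\<lambda>c. Dv c bs)"
proof (induction bs)
  case Nil then show ?case by simp
next
  case (Cons b bs)
  show ?case
  proof (cases "bs = []")
    case True
    have "P 1 (\<lambda>c. ediff (max c b) c)"
      unfolding P_def
    proof (simp, intro conjI allI impI)
      fix c show "0 \<le> ediff (max c b) c" by (rule L3b) simp
    next
      fix c c' :: ereal assume cc: "c \<le> c'"
      show "ediff (max c' b) c' \<le> ediff (max c b) c"
      proof (cases "c' \<le> b")
        case True then have "c \<le> b" using cc by simp
        then show ?thesis using True L2[OF cc, of b] by (simp add: max_def)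
      next
        case False then have "ediff (max c' b) c' = 0" by (simp add: L0)
        then show ?thesis by (simp add: L3b)
      qed
    qed
    then show ?thesis using True by simp
  next
    case False
    note IH = Cons.IH[OF False]
    show ?thesis
    proof (cases "odd (length bs)")
      case True
      then have "(\<forall>c. Dv c bs \<ge> 0) \<and> (\<forall>c c'. c \<le> c' \<longrightarrow> Dv c' bs \<le> Dv c bs)"
        using IH unfolding P_def by simp
      then show ?thesis using h1[of "\<lambda>c. Dv c bs" b] True unfolding P_def by auto
    next
      case F: False
      then have "(\<forall>c. Dv c bs \<le> 0) \<and> (\<forall>c c'. c \<le> c' \<longrightarrow> Dv c bs \<le> Dv c' bs)"
        using IH unfolding P_def by simp
      then show ?thesis using h2[of "\<lambda>c. Dv c bs" b] F unfolding P_def by auto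
    qed
  qed
qed

lemma Delta_Dv:
  assumes "prepaving E \<E>" and "maxitive_measure \<E> \<nu>"
  shows "set Gs \<subseteq> \<E> \<Longrightarrow> G \<in> \<E> \<Longrightarrow> Delta Gs \<nu> G = Dv (\<nu> G) (map \<nu> Gs)"
proof (induction Gs arbitrary: G)
  case Nil then show ?case by simp
next
  case (Cons G1 Gs)
  have u: "G \<union> G1 \<in> \<E>" using assms(1) Cons.prems unfolding prepaving_def by auto
  have m: "\<nu> (G \<union> G1) = max (\<nu> G) (\<nu> G1)"
    using assms(2) Cons.prems unfolding maxitive_measure_def by auto
  show ?case using Cons.IH[of G] Cons.IH[OF _ u] Cons.prems m by simp
qed

lemma pow_m1: "(-1::ereal) ^ k = (if even k then 1 else -1)"
  by (induction k) auto

theorem proposition2p2: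
  fixes E :: "'a set" and \<E> :: "'a set set" and \<nu> :: "'a set \<Rightarrow> ereal"
  assumes "E \<noteq> {}" and "prepaving E \<E>" and "maxitive_measure \<E> \<nu>"
  shows "\<forall>n\<ge>1. \<forall>Gs G. length Gs = n \<and> set Gs \<subseteq> \<E> \<and> G \<in> \<E> \<longrightarrow>
           (-1) ^ (n + 1) * Delta Gs \<nu> G \<ge> 0"
proof (intro allI impI)
  fix n Gs G assume n: "n \<ge> (1::nat)" and h: "length Gs = n \<and> set Gs \<subseteq> \<E> \<and> G \<in> \<E>"
  have ne: "map \<nu> Gs \<noteq> []" using n h by auto
  have eq: "Delta Gs \<nu> G = Dv (\<nu> G) (map \<nu> Gs)" using Delta_Dv[OF assms(2,3)] h by auto
  have "P n (\<lambda>c. Dv c (map \<nu> Gs))" using Dv_P[OF ne] h by simp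
  then have "if odd n then Dv (\<nu> G) (map \<nu> Gs) \<ge> 0 else Dv (\<nu> G) (map \<nu> Gs) \<le> 0"
    unfolding P_def by (auto split: if_splits)
  then show "(-1) ^ (n + 1) * Delta Gs \<nu> G \<ge> 0"
    unfolding eq by (auto simp: pow_m1 split: if_splits)
qed

end
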